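(* Let $x_0\in\mathbb{R}$ be a constant leader state and consider scalar followers updated synchronously for $t\in\mathbb{Z}_{\ge0}$ by $$x_i(t+1)=\frac{1}{1+n_i+\gamma_i}\Big(x_i(t)+\sum_{j\in\mathcal{N}_i}x_j(t-T_{ji})+\gamma_i x_0\Big),\qquad i=1,\dots,n,$$ where the neighbor sets $\mathcal{N}_i$ among followers are fixed and symmetric, $n_i=|\mathcal{N}_i|$, $\gamma_i\in\{0,1\}$, the delays $T_{ji}\in\mathbb{Z}_{\ge0}$ are constant, and the whole network including the leader (edges from the leader to each $i$ with $\gamma_i=1$) is connected. Then, regardless of the delays and initial values, $x_i(t)\to x_0$ as $t\to\infty$ for all $i$. *)

theory Defs
  imports "HOL-Analysis.Analysis"
begin

text \<open>Network of n followers 1..n plus a leader node 0.  Undirected edges: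
  between followers i, j (1 \<le> i, j \<le> n) iff j \<in> N i (N symmetric), and
  between the leader 0 and follower i iff gamma i = 1.\<close>

definition net_edges :: "nat \<Rightarrow> (nat \<Rightarrow> nat set) \<Rightarrow> (nat \<Rightarrow> real) \<Rightarrow> (nat \<times> nat) set" where
  "net_edges n N gamma =
     {(i, j). i \<in> {1..n} \<and> j \<in> {1..n} \<and> j \<in> N i}
     \<union> {(0, i) | i. i \<in> {1..n} \<and> gamma i = 1}
     \<union> {(i, 0) | i. i \<in> {1..n} \<and> gamma i = 1}"

definition network_connected :: "nat \<Rightarrow> (nat \<Rightarrow> nat set) \<Rightarrow> (nat \<Rightarrow> real) \<Rightarrow> bool" where
  "network_connected n N gamma =
     (\<forall>u\<in>{0..n}. \<forall>v\<in>{0..n}. (u, v) \<in> (net_edges n N gamma)\<^sup>*)"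

end

theory Submission
  imports Defs
begin

theorem mainTheorem7:
  fixes n :: nat and x0 :: real
    and N :: "nat \<Rightarrow> nat set" and gamma :: "nat \<Rightarrow> real"
    and T :: "nat \<Rightarrow> nat \<Rightarrow> nat" and x :: "nat \<Rightarrow> int \<Rightarrow> real"
  assumes nbr_sub: "\<And>i. i \<in> {1..n} \<Longrightarrow> N i \<subseteq> {1..n} - {i}"
    and nbr_sym: "\<And>i j. i \<in> {1..n} \<Longrightarrow> j \<in> {1..n} \<Longrightarrow> (j \<in> N i \<longleftrightarrow> i \<in> N j)"
    and gamma01: "\<And>i. i \<in> {1..n} \<Longrightarrow> gamma i = 0 \<or> gamma i = 1"
    and conn: "network_connected n N gamma"
    and update: "\<And>i t. i \<in> {1..n} \<Longrightarrow>
       x i (int t + 1) =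
         (x i (int t) + (\<Sum>j\<in>N i. x j (int t - int (T j i))) + gamma i * x0)
         / (1 + real (card (N i)) + gamma i)"
  shows "\<forall>i\<in>{1..n}. (\<lambda>t::nat. x i (int t)) \<longlonglongrightarrow> x0"
proof (cases "n = 0")
  case True
  then show ?thesis by simp
next
  case False
  then have n1: "n \<ge> 1" by simp
  define y where "y i s = x i s - x0" for i s
  define D where "D = (\<Sum>i\<in>{1..n}. \<Sum>j\<in>{1..n}. T j i)"
  have TD: "T j i \<le> D" if "i \<in> {1..n}" "j \<in> {1..n}" for i j
  proof -
    have "T j i \<le> (\<Sum>j\<in>{1..n}. T j i)" using that(2) by (intro member_le_sum) auto
    also have "\<dots> \<le> D" unfolding D_def using that(1)
      by (intro member_le_sum[where f="\<lambda>i. \<Sum>j\<in>{1..n}. T j i"]) auto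
    finally show ?thesis .
  qed
  have finN: "finite (N i)" if "i \<in> {1..n}" for i
    using nbr_sub[OF that] by (meson finite_Diff finite_atLeastAtMost finite_subset)
  have cardN: "card (N i) \<le> n" if "i \<in> {1..n}" for i
  proof -
    have "card (N i) \<le> card {1..n}" by (rule card_mono) (use nbr_sub[OF that] in auto)
    then show ?thesis by simp
  qed
  have gam: "0 \<le> gamma i" "gamma i \<le> 1" if "i \<in> {1..n}" for i
    using gamma01[OF that] by auto
  have upd: "y i (int t + 1) = (y i (int t) + (\<Sum>j\<in>N i. y j (int t - int (T j i))))
      / (1 + real (card (N i)) + gamma i)" if "i \<in> {1..n}" for i t
  proof -
    let ?c = "real (card (N i))"
    have pos: "1 + ?c + gamma i > 0" using gam[OF that] by linarith
    have "(\<Sum>j\<in>N i. y j (int t - int (T j i))) = (\<Sum>j\<in>N i. x j (int t - int (T j i))) - ?c * x0"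
      by (simp add: y_def sum_subtractf)
    then show ?thesis using update[OF that, of t] pos by (simp add: y_def field_simps)
  qed
  have stepgen: "\<bar>y i (int r + 1)\<bar> \<le> (B + S) / (1 + real (card (N i)) + gamma i)"
    if i: "i \<in> {1..n}" and hB: "\<bar>y i (int r)\<bar> \<le> B"
      and hS: "(\<Sum>j\<in>N i. \<bar>y j (int r - int (T j i))\<bar>) \<le> S" for i r B S
  proof -
    let ?c = "real (card (N i))"
    have pos: "1 + ?c + gamma i > 0" using gam[OF that(1)] by linarith
    have "\<bar>y i (int r) + (\<Sum>j\<in>N i. y j (int r - int (T j i)))\<bar>
        \<le> \<bar>y i (int r)\<bar> + \<bar>\<Sum>j\<in>N i. y j (int r - int (T j i))\<bar>" by (rule abs_triangle_ineq)
    also have "\<dots> \<le> \<bar>y i (int r)\<bar> + (\<Sum>j\<in>N i. \<bar>y j (int r - int (T j i))\<bar>)"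
      by (simp add: sum_abs)
    also have "\<dots> \<le> B + S" using hB hS by linarith
    finally have "\<bar>y i (int r) + (\<Sum>j\<in>N i. y j (int r - int (T j i)))\<bar> \<le> B + S" .
    then show ?thesis using pos
      by (simp add: upd[OF i] abs_divide divide_right_mono)
  qed
  define W where "W t = (\<lambda>(i,s). \<bar>y i s\<bar>) ` ({1..n} \<times> {int t - int D .. int t})" for t :: nat
  define M where "M t = Max (W t)" for t
  have finW: "finite (W t)" for t unfolding W_def by simp
  have neW: "W t \<noteq> {}" for t unfolding W_def using n1 by auto
  have Mge: "\<bar>y i s\<bar> \<le> M t" if "i \<in> {1..n}" "int t - int D \<le> s" "s \<le> int t" for i s t
    unfolding M_def using that by (intro Max_ge[OF finW]) (auto simp: W_def)
  have M0: "0 \<le> M t" for t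
    using Mge[where i=1 and s="int t" and t=t] n1 by force
  have Mle: "M t' \<le> B" if "\<And>i s. i \<in> {1..n} \<Longrightarrow> int t' - int D \<le> s \<Longrightarrow> s \<le> int t' \<Longrightarrow> \<bar>y i s\<bar> \<le> B"
    for t' B
    unfolding M_def using that by (subst Max_le_iff[OF finW neW]) (auto simp: W_def)
  have bound: "\<bar>y i s\<bar> \<le> M t" if "i \<in> {1..n}" "int t - int D \<le> s" for i s t
  proof -
    have "\<forall>i\<in>{1..n}. \<forall>s. int t - int D \<le> s \<and> s \<le> int t + int k \<longrightarrow> \<bar>y i s\<bar> \<le> M t" for k
    proof (induction k)
      case 0
      then show ?case using Mge by auto
    next
      case (Suc k)
      show ?case
      proof (intro ballI allI impI)
        fix i s assume i: "i \<in> {1..n}" and s: "int t - int D \<le> s \<and> s \<le> int t + int (Suc k)"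
        show "\<bar>y i s\<bar> \<le> M t"
        proof (cases "s \<le> int t + int k")
          case True
          then show ?thesis using Suc.IH i s by auto
        next
          case False
          then have se: "s = int (t + k) + 1" using s by auto
          have h1: "\<bar>y i (int (t + k))\<bar> \<le> M t" using Suc.IH i by auto
          have h2: "(\<Sum>j\<in>N i. \<bar>y j (int (t + k) - int (T j i))\<bar>) \<le> real (card (N i)) * M t"
          proof (rule sum_bounded_above)
            fix j assume j: "j \<in> N i"
            then have j1: "j \<in> {1..n}" using nbr_sub[OF i] by auto
            have "T j i \<le> D" using TD[OF i j1] .
            then show "\<bar>y j (int (t + k) - int (T j i))\<bar> \<le> M t"
              using Suc.IH j1 by auto
          qed
          have "\<bar>y i s\<bar> \<le> (M t + real (card (N i)) * M t) / (1 + real (card (N i)) + gamma i)"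
            unfolding se by (rule stepgen[OF i h1 h2])
          also have "\<dots> \<le> M t"
            using gam[OF i] M0[of t]
            by (subst pos_divide_le_eq) (auto simp: algebra_simps intro: mult_nonneg_nonneg)
          finally show ?thesis .
        qed
      qed
    qed
    from this[of "nat (s - int t)"] that show ?thesis by auto
  qed
  define Y where "Y i s = (if i = 0 then 0 else y i s)" for i s
  define P where "P v = (\<exists>K \<epsilon>. 0 < \<epsilon> \<and> \<epsilon> \<le> (1::real) \<and>
      (\<forall>t::nat. \<forall>s::int. int t + int K \<le> s \<longrightarrow> \<bar>Y v s\<bar> \<le> (1 - \<epsilon>) * M t))" for v
  have P0: "P 0" unfolding P_def Y_def using M0 by (intro exI[of _ "0::nat"] exI[of _ "1::real"]) auto
  have Pv: "P v" if "v \<in> {1..n}" for v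
  proof -
    from conn that have "(0, v) \<in> (net_edges n N gamma)\<^sup>*"
      unfolding network_connected_def by auto
    then show ?thesis
    proof (induction rule: rtrancl_induct)
      case base
      then show ?case by (rule P0)
    next
      case (step u v)
      from step.hyps(2) consider (a) "u \<in> {1..n}" "v \<in> {1..n}" "v \<in> N u"
        | (b) "u = 0" "v \<in> {1..n}" "gamma v = 1" | (c) "v = 0"
        unfolding net_edges_def by auto
      then show ?case
      proof cases
        case c
        then show ?thesis using P0 by simp
      next
        case a
        obtain K \<epsilon> where e0: "0 < \<epsilon>" and e1: "\<epsilon> \<le> 1"
          and hK: "\<And>t s. int t + int K \<le> s \<Longrightarrow> \<bar>Y u s\<bar> \<le> (1 - \<epsilon>) * M t"
          using step.IH unfolding P_def by blast
        have uN: "u \<in> N v" using nbr_sym a by blast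
        have v0: "v \<noteq> 0" using a by auto
        have u0: "u \<noteq> 0" using a by auto
        show "P v" unfolding P_def
        proof (intro exI[of _ "K + D + 1"] exI[of _ "\<epsilon> / (real n + 1)"] conjI allI impI)
          show "0 < \<epsilon> / (real n + 1)" using e0 by simp
          show "\<epsilon> / (real n + 1) \<le> 1" using e0 e1 by (simp add: divide_le_eq)
          fix t :: nat and s :: int
          assume st: "int t + int (K + D + 1) \<le> s"
          define r where "r = nat (s - 1)"
          have sr: "s = int r + 1" and rK: "int t + int K + int D \<le> int r"
            using st unfolding r_def by auto
          let ?c = "real (card (N v))"
          have h1: "\<bar>y v (int r)\<bar> \<le> M t" using bound[OF a(2)] rK by auto
          have cpos: "card (N v) \<ge> 1" using uN finN[OF a(2)]
            by (metis One_nat_def Suc_leI card_gt_0_iff empty_iff)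
          have h2: "(\<Sum>j\<in>N v. \<bar>y j (int r - int (T j v))\<bar>) \<le> (?c - \<epsilon>) * M t"
          proof -
            have "(\<Sum>j\<in>N v. \<bar>y j (int r - int (T j v))\<bar>) =
                \<bar>y u (int r - int (T u v))\<bar> + (\<Sum>j\<in>N v - {u}. \<bar>y j (int r - int (T j v))\<bar>)"
              by (rule sum.remove[OF finN[OF a(2)] uN])
            also have "\<dots> \<le> (1 - \<epsilon>) * M t + real (card (N v - {u})) * M t"
            proof (rule add_mono)
              have "T u v \<le> D" using TD[OF a(2) a(1)] .
              then have "int t + int K \<le> int r - int (T u v)" using rK by linarith
              from hK[OF this] show "\<bar>y u (int r - int (T u v))\<bar> \<le> (1 - \<epsilon>) * M t"
                using u0 by (simp add: Y_def)
            next
              show "(\<Sum>j\<in>N v - {u}. \<bar>y j (int r - int (T j v))\<bar>) \<le> real (card (N v - {u})) * M t"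
              proof (rule sum_bounded_above)
                fix j assume j: "j \<in> N v - {u}"
                then have j1: "j \<in> {1..n}" using nbr_sub[OF a(2)] by auto
                have "T j v \<le> D" using TD[OF a(2) j1] .
                then show "\<bar>y j (int r - int (T j v))\<bar> \<le> M t"
                  using bound[OF j1] rK by auto
              qed
            qed
            also have "real (card (N v - {u})) = ?c - 1"
              using uN finN[OF a(2)] cpos by (simp add: of_nat_diff)
            finally show ?thesis by (simp add: algebra_simps)
          qed
          have "\<bar>y v s\<bar> \<le> (M t + (?c - \<epsilon>) * M t) / (1 + ?c + gamma v)"
            unfolding sr by (rule stepgen[OF a(2) h1 h2])
          also have "\<dots> \<le> (1 - \<epsilon> / (real n + 1)) * M t"
          proof -
            have cn: "?c \<le> real n" using cardN[OF a(2)] by simp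
            have g: "0 \<le> gamma v" using gam[OF a(2)] by simp
            have "(1 + ?c - \<epsilon>) \<le> (1 - \<epsilon> / (real n + 1)) * (1 + ?c + gamma v)"
            proof -
              have "\<epsilon> / (real n + 1) \<le> 1" using e0 e1 by (simp add: divide_le_eq)
              have "(1 - \<epsilon> / (real n + 1)) * (1 + ?c) \<le> (1 - \<epsilon> / (real n + 1)) * (1 + ?c + gamma v)"
                using \<open>\<epsilon> / (real n + 1) \<le> 1\<close> g by (intro mult_left_mono) auto
              moreover have "\<epsilon> / (real n + 1) * (1 + ?c) \<le> \<epsilon>"
                using cn e0 by (simp add: divide_le_eq field_simps)
              ultimately show ?thesis by (simp add: algebra_simps)
            qed
            then have pr: "(1 + ?c - \<epsilon>) * M t \<le> (1 - \<epsilon> / (real n + 1)) * (1 + ?c + gamma v) * M t"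
              using M0 by (intro mult_right_mono) auto
            have den: "1 + ?c + gamma v > 0" using g by linarith
            have eq: "M t + (?c - \<epsilon>) * M t = (1 + ?c - \<epsilon>) * M t" by (simp add: algebra_simps)
            show ?thesis unfolding eq
              by (subst pos_divide_le_eq[OF den]) (metis pr mult.commute mult.assoc)
          qed
          finally show "\<bar>Y v s\<bar> \<le> (1 - \<epsilon> / (real n + 1)) * M t" using v0 by (simp add: Y_def)
        qed
      next
        case b
        have v0: "v \<noteq> 0" using b by auto
        show "P v" unfolding P_def
        proof (intro exI[of _ "1::nat"] exI[of _ "1 / (real n + 2)"] conjI allI impI)
          show "0 < 1 / (real n + 2)" by simp
          show "1 / (real n + 2) \<le> 1" by (simp add: divide_le_eq)
          fix t :: nat and s :: int
          assume st: "int t + int 1 \<le> s"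
          define r where "r = nat (s - 1)"
          have sr: "s = int r + 1" and rK: "int t \<le> int r"
            using st unfolding r_def by auto
          let ?c = "real (card (N v))"
          have h1: "\<bar>y v (int r)\<bar> \<le> M t" using bound[OF b(2)] rK by auto
          have h2: "(\<Sum>j\<in>N v. \<bar>y j (int r - int (T j v))\<bar>) \<le> ?c * M t"
          proof (rule sum_bounded_above)
            fix j assume j: "j \<in> N v"
            then have j1: "j \<in> {1..n}" using nbr_sub[OF b(2)] by auto
            have "T j v \<le> D" using TD[OF b(2) j1] .
            then show "\<bar>y j (int r - int (T j v))\<bar> \<le> M t"
              using bound[OF j1] rK by auto
          qed
          have "\<bar>y v s\<bar> \<le> (M t + ?c * M t) / (1 + ?c + gamma v)"
            unfolding sr by (rule stepgen[OF b(2) h1 h2])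
          also have "\<dots> \<le> (1 - 1 / (real n + 2)) * M t"
          proof -
            have cn: "?c \<le> real n" using cardN[OF b(2)] by simp
            have "(1 + ?c) \<le> (1 - 1 / (real n + 2)) * (2 + ?c)"
              using cn by (simp add: field_simps)
            then have "(1 + ?c) * M t \<le> (1 - 1 / (real n + 2)) * (2 + ?c) * M t"
              using M0 by (intro mult_right_mono) auto
            moreover have "2 + ?c > 0" by simp
            ultimately show ?thesis using b(3)
              by (subst pos_divide_le_eq) (auto simp: algebra_simps)
          qed
          finally show "\<bar>Y v s\<bar> \<le> (1 - 1 / (real n + 2)) * M t" using v0 by (simp add: Y_def)
        qed
      qed
    qed
  qed
  have "\<forall>v\<in>{1..n}. \<exists>K. \<exists>\<epsilon>. 0 < \<epsilon> \<and> \<epsilon> \<le> (1::real) \<and>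
      (\<forall>t::nat. \<forall>s::int. int t + int K \<le> s \<longrightarrow> \<bar>y v s\<bar> \<le> (1 - \<epsilon>) * M t)"
    using Pv unfolding P_def Y_def by fastforce
  then obtain Kf where "\<forall>v\<in>{1..n}. \<exists>\<epsilon>. 0 < \<epsilon> \<and> \<epsilon> \<le> (1::real) \<and>
      (\<forall>t::nat. \<forall>s::int. int t + int (Kf v) \<le> s \<longrightarrow> \<bar>y v s\<bar> \<le> (1 - \<epsilon>) * M t)"
    by metis
  then obtain ef where ef: "\<And>v. v\<in>{1..n} \<Longrightarrow> 0 < ef v \<and> ef v \<le> (1::real) \<and>
      (\<forall>t::nat. \<forall>s::int. int t + int (Kf v) \<le> s \<longrightarrow> \<bar>y v s\<bar> \<le> (1 - ef v) * M t)"
    by metis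
  define K where "K = (\<Sum>v\<in>{1..n}. Kf v)"
  define \<epsilon> where "\<epsilon> = Min (ef ` {1..n})"
  have KfK: "Kf v \<le> K" if "v \<in> {1..n}" for v
    unfolding K_def using that by (intro member_le_sum) auto
  have eps_le: "\<epsilon> \<le> ef v" if "v \<in> {1..n}" for v
    unfolding \<epsilon>_def using that by (intro Min_le) auto
  have eps_pos: "0 < \<epsilon>"
  proof -
    have "\<epsilon> \<in> ef ` {1..n}" unfolding \<epsilon>_def using n1 by (intro Min_in) auto
    then show ?thesis using ef by auto
  qed
  have eps1: "\<epsilon> \<le> 1" using eps_le[of 1] ef[of 1] n1 by auto
  define L where "L = K + D + 1"
  have contr: "M (t + L) \<le> (1 - \<epsilon>) * M t" for t
  proof (rule Mle)
    fix i s assume i: "i \<in> {1..n}" and s: "int (t + L) - int D \<le> s"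
    have "int t + int (Kf i) \<le> s" using s KfK[OF i] unfolding L_def by auto
    then have "\<bar>y i s\<bar> \<le> (1 - ef i) * M t" using ef[OF i] by blast
    also have "\<dots> \<le> (1 - \<epsilon>) * M t" using eps_le[OF i] M0[of t] by (intro mult_right_mono) auto
    finally show "\<bar>y i s\<bar> \<le> (1 - \<epsilon>) * M t" .
  qed
  have Mmono: "M t' \<le> M t" if "t \<le> t'" for t t'
    by (rule Mle) (use bound that in auto)
  have Miter: "M (k * L) \<le> (1 - \<epsilon>) ^ k * M 0" for k
  proof (induction k)
    case 0
    then show ?case by simp
  next
    case (Suc k)
    have "M (Suc k * L) = M (k * L + L)" by (simp add: add.commute)
    also have "\<dots> \<le> (1 - \<epsilon>) * M (k * L)" by (rule contr)
    also have "\<dots> \<le> (1 - \<epsilon>) * ((1 - \<epsilon>) ^ k * M 0)"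
      using Suc.IH eps1 by (intro mult_left_mono) auto
    finally show ?case by simp
  qed
  have lim: "(\<lambda>k. (1 - \<epsilon>) ^ k * M 0) \<longlonglongrightarrow> 0"
    by (rule tendsto_mult_left_zero, rule LIMSEQ_power_zero) (use eps_pos eps1 in auto)
  show ?thesis
  proof
    fix i assume i: "i \<in> {1..n}"
    show "(\<lambda>t::nat. x i (int t)) \<longlonglongrightarrow> x0"
    proof (rule LIMSEQ_I)
      fix e :: real assume e: "0 < e"
      from LIMSEQ_D[OF lim e] obtain k where k: "\<And>m. m \<ge> k \<Longrightarrow> norm ((1 - \<epsilon>) ^ m * M 0 - 0) < e"
        by blast
      show "\<exists>no. \<forall>m\<ge>no. norm (x i (int m) - x0) < e"
      proof (intro exI allI impI)
        fix m assume m: "k * L \<le> m"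
        have "norm (x i (int m) - x0) = \<bar>y i (int m)\<bar>" by (simp add: y_def)
        also have "\<dots> \<le> M m" using bound[OF i] by auto
        also have "\<dots> \<le> M (k * L)" using Mmono[OF m] .
        also have "\<dots> \<le> (1 - \<epsilon>) ^ k * M 0" by (rule Miter)
        also have "\<dots> < e" using k[of k] by simp
        finally show "norm (x i (int m) - x0) < e" .
      qed
    qed
  qed
qed

end
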